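(* Let $A,B$ be monoids, $p:A\to B$ and $j:B\to A$ monoid homomorphisms with $p\circ j=\mathrm{id}_B$, and suppose $(A,B,p,j)$ is a Schreier split epimorphism: for every $a\in A$ there is a unique $k\in \mathrm{Ker}(p)$ with $a=k\cdot j(p(a))$. Let $\kappa:\mathrm{Ker}(p)\to A$ be the inclusion and let $q:A\to\mathrm{Ker}(p)$ send $a$ to this unique $k$. Then $q$ satisfies, with respect to $\kappa$, the conditions (ZL1) $q(1_A)=1$; (ZL2) $q(\kappa(x)a)=x\,q(a)$ for all $x\in\mathrm{Ker}(p)$, $a\in A$; (ZL3) $q(aa')=q(a\cdot\kappa(q(a')))$ for all $a,a'\in A$; equivalently, $q$ defines a $\mathsf T^l_\kappa$-algebra structure on the left $\mathrm{Ker}(p)$-set $\mathrm{Ker}(p)$. Moreover $q\circ\kappa=\mathrm{id}_{\mathrm{Ker}(p)}$.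
   Context: $\mathrm{Ker}(p)=\{a\in A: p(a)=1_B\}$, a submonoid of $A$. For a monoid homomorphism $\iota:B'\to A$, $\mathsf T^l_\iota$ is the monad $X\mapsto A\otimes_{B'}X$ on left $B'$-sets induced by extension/restriction of scalars; its algebra structures on the left $B'$-set $B'$ correspond bijectively to maps $A\to B'$ satisfying (ZL1)–(ZL3) relative to $\iota$. *)

theory Defs
  imports "HOL-Algebra.Group"
begin

text \<open>Monoid homomorphism: multiplicative map between carriers preserving the unit.
  (HOL-Algebra's hom only requires multiplicativity.)\<close>
definition monoid_hom :: "('a, 'c) monoid_scheme \<Rightarrow> ('b, 'd) monoid_scheme \<Rightarrow> ('a \<Rightarrow> 'b) set" where
  "monoid_hom A B = {h. h \<in> hom A B \<and> h \<one>\<^bsub>A\<^esub> = \<one>\<^bsub>B\<^esub>}"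

definition mon_ker :: "('a, 'c) monoid_scheme \<Rightarrow> ('b, 'd) monoid_scheme \<Rightarrow> ('a \<Rightarrow> 'b) \<Rightarrow> 'a set" where
  "mon_ker A B p = {a \<in> carrier A. p a = \<one>\<^bsub>B\<^esub>}"

definition schreier_split_epi ::
  "('a, 'c) monoid_scheme \<Rightarrow> ('b, 'd) monoid_scheme \<Rightarrow> ('a \<Rightarrow> 'b) \<Rightarrow> ('b \<Rightarrow> 'a) \<Rightarrow> bool" where
  "schreier_split_epi A B p j \<longleftrightarrow>
     monoid A \<and> monoid B \<and> p \<in> monoid_hom A B \<and> j \<in> monoid_hom B A \<and>
     (\<forall>b\<in>carrier B. p (j b) = b) \<and>
     (\<forall>a\<in>carrier A. \<exists>!k. k \<in> mon_ker A B p \<and> a = k \<otimes>\<^bsub>A\<^esub> j (p a))"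

definition schreier_q ::
  "('a, 'c) monoid_scheme \<Rightarrow> ('b, 'd) monoid_scheme \<Rightarrow> ('a \<Rightarrow> 'b) \<Rightarrow> ('b \<Rightarrow> 'a) \<Rightarrow> 'a \<Rightarrow> 'a" where
  "schreier_q A B p j a = (THE k. k \<in> mon_ker A B p \<and> a = k \<otimes>\<^bsub>A\<^esub> j (p a))"

end

theory Submission
  imports Defs
begin

theorem proposition3p8:
  fixes A :: "('a, 'c) monoid_scheme" and B :: "('b, 'd) monoid_scheme"
    and p :: "'a \<Rightarrow> 'b" and j :: "'b \<Rightarrow> 'a"
  assumes "schreier_split_epi A B p j"
  defines "K \<equiv> mon_ker A B p"
    and "\<kappa> \<equiv> (\<lambda>x::'a. x)"
    and "q \<equiv> schreier_q A B p j"
  shows "(\<forall>a\<in>carrier A. q a \<in> K)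
    \<and> q \<one>\<^bsub>A\<^esub> = \<one>\<^bsub>A\<^esub>
    \<and> (\<forall>x\<in>K. \<forall>a\<in>carrier A. q (\<kappa> x \<otimes>\<^bsub>A\<^esub> a) = x \<otimes>\<^bsub>A\<^esub> q a)
    \<and> (\<forall>a\<in>carrier A. \<forall>a'\<in>carrier A. q (a \<otimes>\<^bsub>A\<^esub> a') = q (a \<otimes>\<^bsub>A\<^esub> \<kappa> (q a')))
    \<and> (\<forall>x\<in>K. q (\<kappa> x) = x)"
proof -
  have mA: "monoid A" and mB: "monoid B" and ph: "p \<in> monoid_hom A B" and jh: "j \<in> monoid_hom B A"
    and pj: "\<forall>b\<in>carrier B. p (j b) = b"
    and U: "\<forall>a\<in>carrier A. \<exists>!k. k \<in> K \<and> a = k \<otimes>\<^bsub>A\<^esub> j (p a)"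
    using assms unfolding schreier_split_epi_def K_def by auto
  interpret A: monoid A by (rule mA)
  interpret B: monoid B by (rule mB)
  have pc: "\<And>x. x \<in> carrier A \<Longrightarrow> p x \<in> carrier B" and
       pm: "\<And>x y. x \<in> carrier A \<Longrightarrow> y \<in> carrier A \<Longrightarrow> p (x \<otimes>\<^bsub>A\<^esub> y) = p x \<otimes>\<^bsub>B\<^esub> p y"
       and p1: "p \<one>\<^bsub>A\<^esub> = \<one>\<^bsub>B\<^esub>"
    using ph unfolding monoid_hom_def hom_def by auto
  have jc: "\<And>x. x \<in> carrier B \<Longrightarrow> j x \<in> carrier A" and
       jm: "\<And>x y. x \<in> carrier B \<Longrightarrow> y \<in> carrier B \<Longrightarrow> j (x \<otimes>\<^bsub>B\<^esub> y) = j x \<otimes>\<^bsub>A\<^esub> j y"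
       and j1: "j \<one>\<^bsub>B\<^esub> = \<one>\<^bsub>A\<^esub>"
    using jh unfolding monoid_hom_def hom_def by auto
  have Kc: "\<And>x. x \<in> K \<Longrightarrow> x \<in> carrier A" and Kp: "\<And>x. x \<in> K \<Longrightarrow> p x = \<one>\<^bsub>B\<^esub>"
    by (auto simp: K_def mon_ker_def)
  have Ki: "\<And>x. x \<in> carrier A \<Longrightarrow> p x = \<one>\<^bsub>B\<^esub> \<Longrightarrow> x \<in> K"
    by (auto simp: K_def mon_ker_def)
  have qdef: "\<And>a. q a = (THE k. k \<in> K \<and> a = k \<otimes>\<^bsub>A\<^esub> j (p a))"
    by (simp add: q_def schreier_q_def K_def)
  have qK: "\<And>a. a \<in> carrier A \<Longrightarrow> q a \<in> K \<and> a = q a \<otimes>\<^bsub>A\<^esub> j (p a)"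
    unfolding qdef by (rule theI'[OF bspec[OF U]])
  have quniq: "\<And>a k. a \<in> carrier A \<Longrightarrow> k \<in> K \<Longrightarrow> a = k \<otimes>\<^bsub>A\<^esub> j (p a) \<Longrightarrow> q a = k"
    unfolding qdef by (rule the1_equality[OF bspec[OF U]]) auto
  have one: "q \<one>\<^bsub>A\<^esub> = \<one>\<^bsub>A\<^esub>"
    by (rule quniq) (auto simp: p1 j1 intro!: Ki)
  have zl2: "\<forall>x\<in>K. \<forall>a\<in>carrier A. q (\<kappa> x \<otimes>\<^bsub>A\<^esub> a) = x \<otimes>\<^bsub>A\<^esub> q a"
  proof (intro ballI)
    fix x a assume x: "x \<in> K" and a: "a \<in> carrier A"
    have xc: "x \<in> carrier A" using Kc x .
    have qa: "q a \<in> K" "a = q a \<otimes>\<^bsub>A\<^esub> j (p a)" using qK a by auto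
    have qac: "q a \<in> carrier A" using Kc qa(1) .
    have pxa: "p (x \<otimes>\<^bsub>A\<^esub> a) = p a" using pm[OF xc a] Kp[OF x] pc[OF a] by simp
    show "q (\<kappa> x \<otimes>\<^bsub>A\<^esub> a) = x \<otimes>\<^bsub>A\<^esub> q a"
      unfolding \<kappa>_def
    proof (rule quniq)
      show "x \<otimes>\<^bsub>A\<^esub> a \<in> carrier A" using xc a by simp
      show "x \<otimes>\<^bsub>A\<^esub> q a \<in> K"
        by (rule Ki) (simp_all add: xc qac pm Kp[OF x] Kp[OF qa(1)])
      show "x \<otimes>\<^bsub>A\<^esub> a = x \<otimes>\<^bsub>A\<^esub> q a \<otimes>\<^bsub>A\<^esub> j (p (x \<otimes>\<^bsub>A\<^esub> a))"
        unfolding pxa using arg_cong[OF qa(2), of "\<lambda>t. x \<otimes>\<^bsub>A\<^esub> t"] by (simp add: A.m_assoc xc qac jc pc a)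
    qed
  qed
  have zl3: "\<forall>a\<in>carrier A. \<forall>a'\<in>carrier A. q (a \<otimes>\<^bsub>A\<^esub> a') = q (a \<otimes>\<^bsub>A\<^esub> \<kappa> (q a'))"
  proof (intro ballI)
    fix a a' assume a: "a \<in> carrier A" and a': "a' \<in> carrier A"
    have qa': "q a' \<in> K" "a' = q a' \<otimes>\<^bsub>A\<^esub> j (p a')" using qK a' by auto
    have qa'c: "q a' \<in> carrier A" using Kc qa'(1) .
    define c where "c = a \<otimes>\<^bsub>A\<^esub> q a'"
    have cc: "c \<in> carrier A" using a qa'c c_def by simp
    have qc: "q c \<in> K" "c = q c \<otimes>\<^bsub>A\<^esub> j (p c)" using qK cc by auto
    have qcc: "q c \<in> carrier A" using Kc qc(1) .
    have pc': "p c = p a" using pm[OF a qa'c] Kp[OF qa'(1)] pc[OF a] c_def by simp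
    have "a \<otimes>\<^bsub>A\<^esub> a' = c \<otimes>\<^bsub>A\<^esub> j (p a')"
      unfolding c_def using arg_cong[OF qa'(2), of "\<lambda>t. a \<otimes>\<^bsub>A\<^esub> t"] by (simp add: A.m_assoc a qa'c jc pc a')
    also have "\<dots> = q c \<otimes>\<^bsub>A\<^esub> (j (p a) \<otimes>\<^bsub>A\<^esub> j (p a'))"
      using arg_cong[OF qc(2), of "\<lambda>t. t \<otimes>\<^bsub>A\<^esub> j (p a')"] by (simp add: pc' A.m_assoc qcc jc pc a a')
    also have "\<dots> = q c \<otimes>\<^bsub>A\<^esub> j (p (a \<otimes>\<^bsub>A\<^esub> a'))"
      using jm pm pc a a' by simp
    finally have eq: "a \<otimes>\<^bsub>A\<^esub> a' = q c \<otimes>\<^bsub>A\<^esub> j (p (a \<otimes>\<^bsub>A\<^esub> a'))" .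
    have "q (a \<otimes>\<^bsub>A\<^esub> a') = q c"
      by (rule quniq[OF _ qc(1) eq]) (simp add: a a')
    then show "q (a \<otimes>\<^bsub>A\<^esub> a') = q (a \<otimes>\<^bsub>A\<^esub> \<kappa> (q a'))"
      by (simp add: c_def \<kappa>_def)
  qed
  have last: "\<forall>x\<in>K. q (\<kappa> x) = x"
  proof
    fix x assume x: "x \<in> K"
    show "q (\<kappa> x) = x" unfolding \<kappa>_def
      by (rule quniq) (use x Kc[OF x] Kp[OF x] j1 in auto)
  qed
  show ?thesis using qK one zl2 zl3 last by blast
qed

end
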